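(* Let $n\ge2$ and $i,j\in\{0,\dots,n-1\}$. If $w\in W(\mathrm{C}_n)$ satisfies $w\beta_i=\beta_j$, then $we_iw^{-1}=e_j$ in $\mathrm{Br}(\mathrm{C}_n)$.
   Context: Let $R$ be a commutative ring with an invertible element $\delta$, and $n\ge1$. The Brauer algebra of type $\mathrm{C}_n$, $\mathrm{Br}(\mathrm{C}_n,R,\delta)$, is the unital associative $R$-algebra generated by $r_0,\dots,r_{n-1},e_0,\dots,e_{n-1}$ subject to the following relations, where for distinct $i,j\in\{0,\dots,n-1\}$ we write $i\sim j$ if $|i-j|=1$ and $i\nsim j$ otherwise: $r_i^2=1$ and $r_ie_i=e_ir_i=e_i$ for all $i$; $e_i^2=\delta^2e_i$ for $i>0$; $e_0^2=\delta e_0$; $r_ir_j=r_jr_i$, $e_ir_j=r_je_i$, $e_ie_j=e_je_i$ for $i\nsim j$; $r_ir_jr_i=r_jr_ir_j$, $r_jr_ie_j=e_ie_j$, $r_ie_jr_i=r_je_ir_j$ for $i\sim j$ with $i,j>0$; and $r_1r_0r_1r_0=r_0r_1r_0r_1$, $r_1r_0e_1=r_0e_1$, $r_1e_0r_1e_0=e_0e_1e_0$, $r_1r_0r_1e_0=e_0r_1r_0r_1$, $e_1r_0e_1=\delta e_1$, $e_1e_0e_1=\delta e_1$, $e_1r_0r_1=e_1r_0$, $e_1e_0r_1=e_1e_0$. Write $\mathrm{Br}(\mathrm{C}_n)=\mathrm{Br}(\mathrm{C}_n,\mathbb{Z}[\delta^{\pm1}],\delta)$. $W(\mathrm{C}_n)$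 is the subgroup of the multiplicative monoid of $\mathrm{Br}(\mathrm{C}_n)$ generated by $r_0,\dots,r_{n-1}$; it is isomorphic to the Weyl group of type $\mathrm{C}_n$ via $r_i\mapsto s_{\beta_i}$, where, with $f_1,\dots,f_n$ the standard basis of $\mathbb{R}^n$, $\beta_0=2f_1$ (long simple root) and $\beta_i=f_{i+1}-f_i$ for $1\le i\le n-1$ (short simple roots), and $s_\beta(x)=x-\frac{2(x,\beta)}{(\beta,\beta)}\beta$. Through this isomorphism $W(\mathrm{C}_n)$ acts on $\mathbb{R}^n$. *)

theory Defs
  imports Complex_Main
begin

datatype gen = R nat | E nat

definition valid_gen :: "nat \<Rightarrow> gen \<Rightarrow> bool" where
  "valid_gen n g = (case g of R i \<Rightarrow> i < n | E i \<Rightarrow> i < n)"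

text \<open>Elements of the free Z[delta^(+-1)]-algebra on the generators are represented as
  Z-valued coefficient functions on monomials (k, w), standing for delta^k * w,
  with k an integer exponent and w a word in the generators.\<close>

type_synonym elt = "int \<times> gen list \<Rightarrow> int"

definition mono :: "int \<Rightarrow> gen list \<Rightarrow> elt" where
  "mono k w = (\<lambda>x. if x = (k, w) then 1 else 0)"

text \<open>Left / right multiplication by the monomial delta^k * u.\<close>
definition lmul :: "int \<Rightarrow> gen list \<Rightarrow> elt \<Rightarrow> elt" where
  "lmul k u f = (\<lambda>(m, w). if take (length u) w = u then f (m - k, drop (length u) w) else 0)"

definition rmul :: "int \<Rightarrow> gen list \<Rightarrow> elt \<Rightarrow> elt" where
  "rmul k u f = (\<lambda>(m, w). if length u \<le> length w \<and> drop (length w - length u) w = u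
                           then f (m - k, take (length w - length u) w) else 0)"

definition adj :: "nat \<Rightarrow> nat \<Rightarrow> bool" where
  "adj i j \<longleftrightarrow> i = j + 1 \<or> j = i + 1"

text \<open>Defining relations: a pair ((u,k),(v,l)) means delta^k u = delta^l v.\<close>
inductive_set BrRels :: "nat \<Rightarrow> ((gen list \<times> int) \<times> (gen list \<times> int)) set" for n :: nat where
  r_sq: "i < n \<Longrightarrow> (([R i, R i], 0), ([], 0)) \<in> BrRels n"
| re: "i < n \<Longrightarrow> (([R i, E i], 0), ([E i], 0)) \<in> BrRels n"
| er: "i < n \<Longrightarrow> (([E i, R i], 0), ([E i], 0)) \<in> BrRels n"
| e_sq: "0 < i \<Longrightarrow> i < n \<Longrightarrow> (([E i, E i], 0), ([E i], 2)) \<in> BrRels n"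
| e0_sq: "0 < n \<Longrightarrow> (([E 0, E 0], 0), ([E 0], 1)) \<in> BrRels n"
| comm_rr: "i < n \<Longrightarrow> j < n \<Longrightarrow> i \<noteq> j \<Longrightarrow> \<not> adj i j \<Longrightarrow> (([R i, R j], 0), ([R j, R i], 0)) \<in> BrRels n"
| comm_er: "i < n \<Longrightarrow> j < n \<Longrightarrow> i \<noteq> j \<Longrightarrow> \<not> adj i j \<Longrightarrow> (([E i, R j], 0), ([R j, E i], 0)) \<in> BrRels n"
| comm_ee: "i < n \<Longrightarrow> j < n \<Longrightarrow> i \<noteq> j \<Longrightarrow> \<not> adj i j \<Longrightarrow> (([E i, E j], 0), ([E j, E i], 0)) \<in> BrRels n"
| braid_rrr: "i < n \<Longrightarrow> j < n \<Longrightarrow> adj i j \<Longrightarrow> 0 < i \<Longrightarrow> 0 < j \<Longrightarrow>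
     (([R i, R j, R i], 0), ([R j, R i, R j], 0)) \<in> BrRels n"
| braid_rre: "i < n \<Longrightarrow> j < n \<Longrightarrow> adj i j \<Longrightarrow> 0 < i \<Longrightarrow> 0 < j \<Longrightarrow>
     (([R j, R i, E j], 0), ([E i, E j], 0)) \<in> BrRels n"
| braid_rer: "i < n \<Longrightarrow> j < n \<Longrightarrow> adj i j \<Longrightarrow> 0 < i \<Longrightarrow> 0 < j \<Longrightarrow>
     (([R i, E j, R i], 0), ([R j, E i, R j], 0)) \<in> BrRels n"
| c1: "1 < n \<Longrightarrow> (([R 1, R 0, R 1, R 0], 0), ([R 0, R 1, R 0, R 1], 0)) \<in> BrRels n"
| c2: "1 < n \<Longrightarrow> (([R 1, R 0, E 1], 0), ([R 0, E 1], 0)) \<in> BrRels n"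
| c3: "1 < n \<Longrightarrow> (([R 1, E 0, R 1, E 0], 0), ([E 0, E 1, E 0], 0)) \<in> BrRels n"
| c4: "1 < n \<Longrightarrow> (([R 1, R 0, R 1, E 0], 0), ([E 0, R 1, R 0, R 1], 0)) \<in> BrRels n"
| c5: "1 < n \<Longrightarrow> (([E 1, R 0, E 1], 0), ([E 1], 1)) \<in> BrRels n"
| c6: "1 < n \<Longrightarrow> (([E 1, E 0, E 1], 0), ([E 1], 1)) \<in> BrRels n"
| c7: "1 < n \<Longrightarrow> (([E 1, R 0, R 1], 0), ([E 1, R 0], 0)) \<in> BrRels n"
| c8: "1 < n \<Longrightarrow> (([E 1, E 0, R 1], 0), ([E 1, E 0], 0)) \<in> BrRels n"

inductive_set BrIdeal :: "nat \<Rightarrow> elt set" for n :: nat where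
  rel: "((u, k), (v, l)) \<in> BrRels n \<Longrightarrow> (\<lambda>x. mono k u x - mono l v x) \<in> BrIdeal n"
| zero: "(\<lambda>_. 0) \<in> BrIdeal n"
| add: "a \<in> BrIdeal n \<Longrightarrow> b \<in> BrIdeal n \<Longrightarrow> (\<lambda>x. a x + b x) \<in> BrIdeal n"
| neg: "a \<in> BrIdeal n \<Longrightarrow> (\<lambda>x. - a x) \<in> BrIdeal n"
| lmul: "a \<in> BrIdeal n \<Longrightarrow> list_all (valid_gen n) u \<Longrightarrow> lmul k u a \<in> BrIdeal n"
| rmul: "a \<in> BrIdeal n \<Longrightarrow> list_all (valid_gen n) u \<Longrightarrow> rmul k u a \<in> BrIdeal n"

definition br_eq :: "nat \<Rightarrow> elt \<Rightarrow> elt \<Rightarrow> bool" where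
  "br_eq n a b \<longleftrightarrow> (\<lambda>x. a x - b x) \<in> BrIdeal n"

text \<open>Vectors of R^n are functions nat => real with coordinates 1..n (f_k = unit vector at k).\<close>
definition inner_n :: "nat \<Rightarrow> (nat \<Rightarrow> real) \<Rightarrow> (nat \<Rightarrow> real) \<Rightarrow> real" where
  "inner_n n x y = (\<Sum>k = 1..n. x k * y k)"

definition beta :: "nat \<Rightarrow> nat \<Rightarrow> real" where
  "beta i = (if i = 0 then (\<lambda>k. if k = 1 then 2 else 0)
             else (\<lambda>k. if k = i + 1 then 1 else if k = i then -1 else 0))"

definition refl_vec :: "nat \<Rightarrow> (nat \<Rightarrow> real) \<Rightarrow> (nat \<Rightarrow> real) \<Rightarrow> (nat \<Rightarrow> real)" where
  "refl_vec n b x = (\<lambda>k. x k - (2 * inner_n n x b / inner_n n b b) * b k)"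

text \<open>Action of the Weyl group element r_{a1} ... r_{am} given as the word [a1,...,am].\<close>
definition word_act :: "nat \<Rightarrow> nat list \<Rightarrow> (nat \<Rightarrow> real) \<Rightarrow> (nat \<Rightarrow> real)" where
  "word_act n ws x = foldr (\<lambda>a. refl_vec n (beta a)) ws x"

end

theory Submission
  imports Defs
begin


abbreviation vw :: "nat \<Rightarrow> gen list \<Rightarrow> bool" where "vw n \<equiv> list_all (valid_gen n)"

definition weq :: "nat \<Rightarrow> gen list \<Rightarrow> gen list \<Rightarrow> bool" where
  "weq n u v \<longleftrightarrow> br_eq n (mono 0 u) (mono 0 v) \<and> vw n u \<and> vw n v"

definition cj :: "nat \<Rightarrow> gen list \<Rightarrow> gen list" where
  "cj k X = R k # X @ [R k]"

lemma br_refl: "br_eq n a a"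
proof -
  have "(\<lambda>x. a x - a x) = (\<lambda>_. 0)" by simp
  thus ?thesis unfolding br_eq_def using BrIdeal.zero by metis
qed

lemma br_sym: "br_eq n a b \<Longrightarrow> br_eq n b a"
proof -
  assume "br_eq n a b"
  hence "(\<lambda>x. - (a x - b x)) \<in> BrIdeal n" unfolding br_eq_def by (rule BrIdeal.neg)
  moreover have "(\<lambda>x. - (a x - b x)) = (\<lambda>x. b x - a x)" by auto
  ultimately show ?thesis unfolding br_eq_def by simp
qed

lemma br_trans: "br_eq n a b \<Longrightarrow> br_eq n b c \<Longrightarrow> br_eq n a c"
proof -
  assume "br_eq n a b" "br_eq n b c"
  hence "(\<lambda>x. (a x - b x) + (b x - c x)) \<in> BrIdeal n" unfolding br_eq_def by (rule BrIdeal.add)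
  moreover have "(\<lambda>x. (a x - b x) + (b x - c x)) = (\<lambda>x. a x - c x)" by auto
  ultimately show ?thesis unfolding br_eq_def by simp
qed

lemma lmul_mono: "lmul 0 x (\<lambda>z. mono 0 u z - mono 0 v z) = (\<lambda>z. mono 0 (x@u) z - mono 0 (x@v) z)"
proof (rule ext, clarify)
  fix m :: int and w :: "gen list"
  have A: "\<And>u. (w = x @ u) \<longleftrightarrow> (take (length x) w = x \<and> drop (length x) w = u)"
    by (metis append_eq_conv_conj)
  show "lmul 0 x (\<lambda>z. mono 0 u z - mono 0 v z) (m, w) = mono 0 (x @ u) (m, w) - mono 0 (x @ v) (m, w)"
    unfolding lmul_def mono_def using A[of u] A[of v] by auto
qed

lemma rmul_mono: "rmul 0 y (\<lambda>z. mono 0 u z - mono 0 v z) = (\<lambda>z. mono 0 (u@y) z - mono 0 (v@y) z)"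
proof (rule ext, clarify)
  fix m :: int and w :: "gen list"
  have A: "\<And>u. (w = u @ y) \<longleftrightarrow> (length y \<le> length w \<and> drop (length w - length y) w = y \<and> take (length w - length y) w = u)"
  proof
    fix u assume "w = u @ y" thus "length y \<le> length w \<and> drop (length w - length y) w = y \<and> take (length w - length y) w = u" by simp
  next
    fix u assume "length y \<le> length w \<and> drop (length w - length y) w = y \<and> take (length w - length y) w = u"
    thus "w = u @ y" by (metis append_take_drop_id)
  qed
  show "rmul 0 y (\<lambda>z. mono 0 u z - mono 0 v z) (m, w) = mono 0 (u @ y) (m, w) - mono 0 (v @ y) (m, w)"
    unfolding rmul_def mono_def using A[of u] A[of v] by auto
qed

lemma br_ctx: "br_eq n (mono 0 u) (mono 0 v) \<Longrightarrow> vw n x \<Longrightarrow> vw n y \<Longrightarrow>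
   br_eq n (mono 0 (x@u@y)) (mono 0 (x@v@y))"
proof -
  assume a: "br_eq n (mono 0 u) (mono 0 v)" "vw n x" "vw n y"
  have "lmul 0 x (\<lambda>z. mono 0 u z - mono 0 v z) \<in> BrIdeal n"
    using a unfolding br_eq_def by (intro BrIdeal.lmul)
  hence "(\<lambda>z. mono 0 (x@u) z - mono 0 (x@v) z) \<in> BrIdeal n" by (simp add: lmul_mono)
  hence "rmul 0 y (\<lambda>z. mono 0 (x@u) z - mono 0 (x@v) z) \<in> BrIdeal n"
    using a by (intro BrIdeal.rmul)
  thus ?thesis unfolding br_eq_def by (simp add: rmul_mono)
qed

lemma weq_refl: "vw n u \<Longrightarrow> weq n u u" unfolding weq_def by (simp add: br_refl)
lemma weq_sym: "weq n u v \<Longrightarrow> weq n v u" unfolding weq_def by (simp add: br_sym)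
lemma weq_trans[trans]: "weq n u v \<Longrightarrow> weq n v w \<Longrightarrow> weq n u w" unfolding weq_def by (blast intro: br_trans)
lemma weq_ctx: "weq n u v \<Longrightarrow> vw n x \<Longrightarrow> vw n y \<Longrightarrow> A = x@u@y \<Longrightarrow> B = x@v@y \<Longrightarrow> weq n A B"
  unfolding weq_def by (auto intro: br_ctx)
lemma weq_rel: "((u,0),(v,0)) \<in> BrRels n \<Longrightarrow> vw n u \<Longrightarrow> vw n v \<Longrightarrow> weq n u v"
  unfolding weq_def br_eq_def by (auto intro: BrIdeal.rel)
lemma weq_vw1: "weq n u v \<Longrightarrow> vw n u" unfolding weq_def by simp
lemma weq_vw2: "weq n u v \<Longrightarrow> vw n v" unfolding weq_def by simp

lemma vw_cj[simp]: "vw n (cj k X) \<longleftrightarrow> k < n \<and> vw n X"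
  unfolding cj_def by (auto simp: valid_gen_def)

lemma cj_cong: "weq n X Y \<Longrightarrow> k < n \<Longrightarrow> weq n (cj k X) (cj k Y)"
  by (rule weq_ctx[of n X Y "[R k]" "[R k]"]) (auto simp: cj_def valid_gen_def)

lemma rr: "k < n \<Longrightarrow> weq n [R k, R k] []"
  by (rule weq_rel) (auto intro: BrRels.intros simp: valid_gen_def)

lemma cj_inv: "vw n X \<Longrightarrow> k < n \<Longrightarrow> weq n (cj k (cj k X)) X"
proof -
  assume a: "vw n X" "k < n"
  have "weq n (cj k (cj k X)) (X @ [R k, R k])"
    by (rule weq_ctx[OF rr[OF a(2)], of "[]" "X @ [R k, R k]"]) (use a in \<open>auto simp: cj_def valid_gen_def\<close>)
  also have "weq n \<dots> X"
    by (rule weq_ctx[OF rr[OF a(2)], of X "[]"]) (auto simp: a)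
  finally show ?thesis .
qed

lemma cj_comm: "k < n \<Longrightarrow> m < n \<Longrightarrow> k \<noteq> m \<Longrightarrow> \<not> adj k m \<Longrightarrow> vw n X \<Longrightarrow>
   weq n (cj k (cj m X)) (cj m (cj k X))"
proof -
  assume a: "k < n" "m < n" "k \<noteq> m" "\<not> adj k m" "vw n X"
  have r1: "weq n [R k, R m] [R m, R k]"
    by (rule weq_rel) (use a in \<open>auto intro: BrRels.intros simp: valid_gen_def\<close>)
  have r2: "weq n [R m, R k] [R k, R m]"
    by (rule weq_rel) (use a in \<open>auto intro!: BrRels.intros simp: valid_gen_def adj_def\<close>)
  have "weq n (cj k (cj m X)) (R m # R k # X @ [R m, R k])"
    by (rule weq_ctx[OF r1, of "[]" "X @ [R m, R k]"]) (use a in \<open>auto simp: cj_def valid_gen_def\<close>)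
  also have "weq n \<dots> (cj m (cj k X))"
    by (rule weq_ctx[OF r2, of "[R m, R k] @ X" "[]"]) (use a in \<open>auto simp: cj_def valid_gen_def\<close>)
  finally show ?thesis .
qed

lemma cj_braid: "i < n \<Longrightarrow> j < n \<Longrightarrow> adj i j \<Longrightarrow> 0 < i \<Longrightarrow> 0 < j \<Longrightarrow> vw n X \<Longrightarrow>
   weq n (cj i (cj j (cj i X))) (cj j (cj i (cj j X)))"
proof -
  assume a: "i < n" "j < n" "adj i j" "0 < i" "0 < j" "vw n X"
  have r1: "weq n [R i, R j, R i] [R j, R i, R j]"
    by (rule weq_rel) (use a in \<open>auto intro: BrRels.intros simp: valid_gen_def\<close>)
  have "weq n (cj i (cj j (cj i X))) ([R j, R i, R j] @ X @ [R i, R j, R i])"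
    by (rule weq_ctx[OF r1, of "[]" "X @ [R i, R j, R i]"]) (use a in \<open>auto simp: cj_def valid_gen_def\<close>)
  also have "weq n \<dots> (cj j (cj i (cj j X)))"
    by (rule weq_ctx[OF r1, of "[R j, R i, R j] @ X" "[]"]) (use a in \<open>auto simp: cj_def valid_gen_def\<close>)
  finally show ?thesis .
qed

lemma cj_c1: "1 < n \<Longrightarrow> vw n X \<Longrightarrow>
   weq n (cj 0 (cj 1 (cj 0 (cj 1 X)))) (cj 1 (cj 0 (cj 1 (cj 0 X))))"
proof -
  assume a: "1 < n" "vw n X"
  have r1: "weq n [R 1, R 0, R 1, R 0] [R 0, R 1, R 0, R 1]"
    using a by (intro weq_rel BrRels.c1) (auto simp: valid_gen_def)
  have "weq n (cj 0 (cj 1 (cj 0 (cj 1 X)))) ([R 1, R 0, R 1, R 0] @ X @ [R 1, R 0, R 1, R 0])"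
    by (rule weq_ctx[OF weq_sym[OF r1], of "[]" "X @ [R 1, R 0, R 1, R 0]"]) (use a in \<open>auto simp: cj_def valid_gen_def\<close>)
  also have "weq n \<dots> (cj 1 (cj 0 (cj 1 (cj 0 X))))"
    by (rule weq_ctx[OF r1, of "[R 1, R 0, R 1, R 0] @ X" "[]"]) (use a in \<open>auto simp: cj_def valid_gen_def\<close>)
  finally show ?thesis .
qed

lemma cj_eq: "weq n (cj k X) Y \<Longrightarrow> k < n \<Longrightarrow> weq n X (cj k Y)"
proof -
  assume a: "weq n (cj k X) Y" "k < n"
  have "vw n X" using weq_vw1[OF a(1)] by simp
  have "weq n X (cj k (cj k X))" by (rule weq_sym, rule cj_inv) (use a \<open>vw n X\<close> in auto)
  also have "weq n \<dots> (cj k Y)" by (rule cj_cong[OF a])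
  finally show ?thesis .
qed

lemma cjE_self: "i < n \<Longrightarrow> weq n (cj i [E i]) [E i]"
proof -
  assume a: "i < n"
  have r1: "weq n [R i, E i] [E i]" "weq n [E i, R i] [E i]"
    by (rule weq_rel; use a in \<open>auto intro: BrRels.intros simp: valid_gen_def\<close>)+
  have "weq n (cj i [E i]) [E i, R i]"
    by (rule weq_ctx[OF r1(1), of "[]" "[R i]"]) (use a in \<open>auto simp: cj_def valid_gen_def\<close>)
  also have "weq n \<dots> [E i]" by (rule r1(2))
  finally show ?thesis .
qed

lemma cjE_comm: "k < n \<Longrightarrow> m < n \<Longrightarrow> k \<noteq> m \<Longrightarrow> \<not> adj k m \<Longrightarrow> weq n (cj k [E m]) [E m]"
proof -
  assume a: "k < n" "m < n" "k \<noteq> m" "\<not> adj k m"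
  have r1: "weq n [R k, E m] [E m, R k]"
    by (rule weq_sym, rule weq_rel) (use a in \<open>auto intro!: BrRels.intros simp: valid_gen_def adj_def\<close>)
  have "weq n (cj k [E m]) ([E m] @ [R k, R k])"
    by (rule weq_ctx[OF r1, of "[]" "[R k]"]) (use a in \<open>auto simp: cj_def valid_gen_def\<close>)
  also have "weq n \<dots> [E m]"
    by (rule weq_ctx[OF rr[OF a(1)], of "[E m]" "[]"]) (use a in \<open>auto simp: valid_gen_def\<close>)
  finally show ?thesis .
qed

lemma c4_lem: "1 < n \<Longrightarrow> weq n (cj 0 (cj 1 [E 0])) (cj 1 [E 0])"
proof -
  assume a: "1 < n"
  have r1: "weq n [R 1, R 0, R 1, E 0] [E 0, R 1, R 0, R 1]"
    using a by (intro weq_rel BrRels.c4) (auto simp: valid_gen_def)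
  have "weq n (cj 0 (cj 1 [E 0])) ([R 1, R 1] @ cj 0 (cj 1 [E 0]))"
    by (rule weq_ctx[OF weq_sym[OF rr[of 1]], where x="[]" and y="cj 0 (cj 1 [E 0])"]) (use a in \<open>auto simp: cj_def valid_gen_def\<close>)
  also have "weq n \<dots> ([R 1] @ [E 0, R 1, R 0, R 1] @ [R 1, R 0])"
    by (rule weq_ctx[OF r1, of "[R 1]" "[R 1, R 0]"]) (use a in \<open>auto simp: cj_def valid_gen_def\<close>)
  also have "weq n \<dots> ([R 1, E 0, R 1, R 0] @ [] @ [R 0])"
    by (rule weq_ctx[OF rr, where x="[R 1, E 0, R 1, R 0]" and y="[R 0]"]) (use a in \<open>auto simp: cj_def valid_gen_def\<close>)
  also have "weq n \<dots> ([R 1, E 0, R 1] @ [] @ [])"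
    by (rule weq_ctx[OF rr, where x="[R 1, E 0, R 1]" and y="[]"]) (use a in \<open>auto simp: cj_def valid_gen_def\<close>)
  finally show ?thesis by (simp add: cj_def)
qed

lemma rer_lem: "0 < a \<Longrightarrow> a + 1 < n \<Longrightarrow> weq n (cj a (cj (a+1) [E a])) [E (a+1)]"
proof -
  assume a: "0 < a" "a + 1 < n"
  have r1: "weq n (cj (a+1) [E a]) (cj a [E (a+1)])" unfolding cj_def
    by (rule weq_rel) (use a in \<open>auto intro!: BrRels.intros simp: valid_gen_def adj_def\<close>)
  have "weq n (cj a (cj (a+1) [E a])) (cj a (cj a [E (a+1)]))" by (rule cj_cong[OF r1]) (use a in auto)
  also have "weq n \<dots> [E (a+1)]" by (rule cj_inv) (use a in \<open>auto simp: valid_gen_def\<close>)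
  finally show ?thesis .
qed

lemma c27_lem: "1 < n \<Longrightarrow> weq n (cj 1 (cj 0 [E 1])) (cj 0 [E 1])"
proof -
  assume a: "1 < n"
  have r1: "weq n [R 1, R 0, E 1] [R 0, E 1]" "weq n [E 1, R 0, R 1] [E 1, R 0]"
    using a by (intro weq_rel BrRels.c2 BrRels.c7; auto simp: valid_gen_def)+
  have "weq n (cj 1 (cj 0 [E 1])) ([R 0, E 1] @ [R 0, R 1])"
    by (rule weq_ctx[OF r1(1), of "[]" "[R 0, R 1]"]) (use a in \<open>auto simp: cj_def valid_gen_def\<close>)
  also have "weq n \<dots> ([R 0] @ [E 1, R 0] @ [])"
    by (rule weq_ctx[OF r1(2), of "[R 0]" "[]"]) (use a in \<open>auto simp: cj_def valid_gen_def\<close>)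
  finally show ?thesis by (simp add: cj_def)
qed



fun Lw :: "nat \<Rightarrow> gen list" where
  "Lw 0 = [E 0]" | "Lw (Suc 0) = [E 0]" | "Lw (Suc (Suc a)) = cj (Suc a) (Lw (Suc a))"

primrec Dw :: "nat \<Rightarrow> nat \<Rightarrow> gen list" where
  "Dw a 0 = [E a]" | "Dw a (Suc b) = (if b \<le> a then [E a] else cj b (Dw a b))"

primrec Sw :: "nat \<Rightarrow> nat \<Rightarrow> gen list" where
  "Sw 0 b = cj 0 (Dw 1 b)" | "Sw (Suc a) b = (if a = 0 then cj 0 (Dw 1 b) else cj a (Sw a b))"

lemma Lw_step: "1 \<le> a \<Longrightarrow> Lw (Suc a) = cj a (Lw a)" by (cases a) auto
lemma Dw_base: "Dw a (Suc a) = [E a]" by simp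
lemma Dw_step: "a < b \<Longrightarrow> Dw a (Suc b) = cj b (Dw a b)" by simp
lemma Sw_base: "Sw 1 b = cj 0 (Dw 1 b)" by simp
lemma Sw_step: "1 \<le> a \<Longrightarrow> Sw (Suc a) b = cj a (Sw a b)" by simp

lemma vw_Lw: "0 < n \<Longrightarrow> a \<le> n \<Longrightarrow> vw n (Lw a)"
  by (induction a rule: Lw.induct) (auto simp: valid_gen_def)
lemma vw_Dw: "a < n \<Longrightarrow> b \<le> n \<Longrightarrow> vw n (Dw a b)"
  by (induction b) (auto simp: valid_gen_def)
lemma vw_Sw: "1 < n \<Longrightarrow> b \<le> n \<Longrightarrow> a \<le> n \<Longrightarrow> vw n (Sw a b)"
  by (induction a) (auto simp: vw_Dw)

lemma L1: "\<forall>k. 1 \<le> a \<longrightarrow> a \<le> n \<longrightarrow> k < n \<longrightarrow> k \<noteq> a \<longrightarrow> (k \<noteq> a - 1 \<or> k = 0) \<longrightarrow> weq n (cj k (Lw a)) (Lw a)"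
proof (induction a rule: less_induct)
  case (less a)
  show ?case
  proof (intro allI impI)
    fix k assume h: "1 \<le> a" "a \<le> n" "k < n" "k \<noteq> a" "k \<noteq> a - 1 \<or> k = 0"
    consider "a = 1" | "a = 2" | m where "a = m + 3"
    proof -
      have "a = 1 \<or> a = 2 \<or> a \<ge> 3" using h(1) by arith
      thus ?thesis using that(1) that(2) that(3)[of "a-3"] by auto
    qed
    thus "weq n (cj k (Lw a)) (Lw a)"
    proof cases
      case 1
      show ?thesis
      proof (cases "k = 0")
        case True thus ?thesis using 1 h by (simp add: cjE_self)
      next
        case False thus ?thesis using 1 h by (simp add: cjE_comm adj_def)
      qed
    next
      case 2
      have L2: "Lw a = cj 1 [E 0]" using 2 by (simp add: numeral_2_eq_2)
      show ?thesis
      proof (cases "k = 0")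
        case True
        have n1: "1 < n" using h 2 by simp
        show ?thesis using c4_lem[OF n1] L2 True by simp
      next
        case False
        have "weq n (cj k (cj 1 [E 0])) (cj 1 (cj k [E 0]))"
          using False h 2 by (intro cj_comm) (auto simp: adj_def valid_gen_def)
        also have "weq n \<dots> (cj 1 [E 0])"
          using False h 2 by (intro cj_cong cjE_comm) (auto simp: adj_def)
        finally show ?thesis using L2 by simp
      qed
    next
      case 3
      have La: "Lw a = cj (m+2) (cj (m+1) (Lw (m+1)))" using 3
        by (simp add: numeral_3_eq_3)
      have La1: "Lw (m+2) = cj (m+1) (Lw (m+1))" by simp
      have v: "vw n (Lw (m+1))" using h 3 by (intro vw_Lw) auto
      show ?thesis
      proof (cases "k = m + 1")
        case True
        have "weq n (cj k (Lw a)) (cj (m+2) (cj (m+1) (cj (m+2) (Lw (m+1)))))"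
          unfolding La True using h 3 v by (intro cj_braid) (auto simp: adj_def)
        also have "weq n \<dots> (cj (m+2) (cj (m+1) (Lw (m+1))))"
          using less.IH[rule_format, of "m+1" "m+2"] h 3 by (intro cj_cong) auto
        finally show ?thesis using La by simp
      next
        case False
        have "weq n (cj k (Lw a)) (cj (m+2) (cj k (Lw (m+2))))"
          unfolding La La[symmetric] La1[symmetric] using h 3 v False
          by (intro cj_comm) (auto simp: adj_def vw_Lw)
        also have "weq n \<dots> (cj (m+2) (Lw (m+2)))"
          using less.IH[rule_format, of "m+2" k] h 3 False by (intro cj_cong) auto
        finally show ?thesis using La La1 by simp
      qed
    qed
  qed
qed



lemma D1: "\<forall>k. 1 \<le> a \<longrightarrow> a < b \<longrightarrow> b \<le> n \<longrightarrow> k < n \<longrightarrow> k \<noteq> a - 1 \<longrightarrow> k \<noteq> a \<longrightarrow> k \<noteq> b - 1 \<longrightarrow> k \<noteq> b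
   \<longrightarrow> weq n (cj k (Dw a b)) (Dw a b)"
proof (induction b rule: less_induct)
  case (less b)
  show ?case
  proof (intro allI impI)
    fix k assume h: "1 \<le> a" "a < b" "b \<le> n" "k < n" "k \<noteq> a - 1" "k \<noteq> a" "k \<noteq> b - 1" "k \<noteq> b"
    consider "b = Suc a" | c where "b = Suc (Suc c)" "a \<le> c"
    proof -
      have "b = Suc a \<or> b \<ge> a + 2" using h by arith
      thus ?thesis using that(1) that(2)[of "b - 2"] by auto
    qed
    thus "weq n (cj k (Dw a b)) (Dw a b)"
    proof cases
      case 1
      thus ?thesis using h by (simp add: cjE_comm adj_def)
    next
      case 2
      have Db: "Dw a b = cj (Suc c) (Dw a (Suc c))" using 2 by simp
      have v: "vw n (Dw a (Suc c))" using h 2 by (intro vw_Dw) auto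
      show ?thesis
      proof (cases "k = c")
        case True
        have Dc: "Dw a (Suc c) = cj c (Dw a c)" using True h 2 by simp
        have v2: "vw n (Dw a c)" using h 2 by (intro vw_Dw) auto
        have "weq n (cj k (Dw a b)) (cj (Suc c) (cj c (cj (Suc c) (Dw a c))))"
          unfolding Db Dc True using h 2 v2 True by (intro cj_braid) (auto simp: adj_def)
        also have "weq n \<dots> (cj (Suc c) (cj c (Dw a c)))"
          using less.IH[rule_format, of c "Suc c"] h 2 True by (intro cj_cong) auto
        finally show ?thesis using Db Dc by simp
      next
        case False
        have "weq n (cj k (Dw a b)) (cj (Suc c) (cj k (Dw a (Suc c))))"
          unfolding Db using h 2 v False by (intro cj_comm) (auto simp: adj_def)
        also have "weq n \<dots> (cj (Suc c) (Dw a (Suc c)))"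
          using less.IH[rule_format, of "Suc c" k] h 2 False by (intro cj_cong) auto
        finally show ?thesis using Db by simp
      qed
    qed
  qed
qed

lemma D1': "1 \<le> a \<Longrightarrow> a < b \<Longrightarrow> b \<le> n \<Longrightarrow> k < n \<Longrightarrow> k \<noteq> a - 1 \<Longrightarrow> k \<noteq> a \<Longrightarrow> k \<noteq> b - 1 \<Longrightarrow> k \<noteq> b
   \<Longrightarrow> weq n (cj k (Dw a b)) (Dw a b)"
  using D1 by blast

lemma D4: "1 \<le> a \<Longrightarrow> a + 1 < b \<Longrightarrow> b \<le> n \<Longrightarrow> weq n (cj a (Dw a b)) (Dw (a+1) b)"
proof (induction b)
  case 0 thus ?case by simp
next
  case (Suc b)
  show ?case
  proof (cases "b = a + 1")
    case True
    have "Dw a (Suc b) = cj (a+1) [E a]" "Dw (a+1) (Suc b) = [E (a+1)]" using True by auto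
    thus ?thesis using rer_lem[of a n] Suc.prems True by simp
  next
    case False
    have "weq n (cj a (Dw a (Suc b))) (cj b (cj a (Dw a b)))"
      using Suc.prems False by (simp, intro cj_comm) (auto simp: adj_def vw_Dw)
    also have "weq n \<dots> (cj b (Dw (a+1) b))"
      using Suc.prems Suc.IH False by (intro cj_cong) auto
    finally show ?thesis using Suc.prems False by simp
  qed
qed

lemma D5: "2 \<le> a \<Longrightarrow> a < b \<Longrightarrow> b \<le> n \<Longrightarrow> weq n (cj (a-1) (Dw a b)) (Dw (a-1) b)"
proof -
  assume h: "2 \<le> a" "a < b" "b \<le> n"
  have "weq n (cj (a-1) (Dw (a-1) b)) (Dw a b)" using D4[of "a-1" b n] h by simp
  hence "weq n (Dw (a-1) b) (cj (a-1) (Dw a b))" by (rule cj_eq) (use h in auto)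
  thus ?thesis by (rule weq_sym)
qed

lemma D2: "a + 1 < b \<Longrightarrow> b \<le> n \<Longrightarrow> weq n (cj (b-1) (Dw a b)) (Dw a (b-1))"
proof -
  assume h: "a + 1 < b" "b \<le> n"
  then obtain c where c: "b = Suc c" by (cases b) auto
  have "Dw a b = cj c (Dw a c)" using c h by simp
  thus ?thesis using c h by (simp, intro cj_inv) (auto intro: vw_Dw)
qed

lemma S3: "1 \<le> a \<Longrightarrow> a < b \<Longrightarrow> b < n \<Longrightarrow> weq n (cj b (Sw a b)) (Sw a (b+1))"
proof (induction a rule: nat_induct_at_least)
  case base
  have "weq n (cj b (cj 0 (Dw 1 b))) (cj 0 (cj b (Dw 1 b)))"
    using base by (intro cj_comm) (auto simp: adj_def vw_Dw)
  thus ?case using base by simp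
next
  case (Suc a)
  have "weq n (cj b (cj a (Sw a b))) (cj a (cj b (Sw a b)))"
    using Suc by (intro cj_comm) (auto simp: adj_def vw_Sw)
  also have "weq n \<dots> (cj a (Sw a (b+1)))"
    using Suc by (intro cj_cong) auto
  finally show ?case using Suc by simp
qed

lemma S4: "1 \<le> a \<Longrightarrow> a + 1 < b \<Longrightarrow> b \<le> n \<Longrightarrow> weq n (cj (b-1) (Sw a b)) (Sw a (b-1))"
proof -
  assume h: "1 \<le> a" "a + 1 < b" "b \<le> n"
  have "weq n (cj (b-1) (Sw a (b-1))) (Sw a b)" using S3[of a "b-1" n] h by simp
  hence "weq n (Sw a (b-1)) (cj (b-1) (Sw a b))" by (rule cj_eq) (use h in auto)
  thus ?thesis by (rule weq_sym)
qed


lemma S1: "\<forall>k. 1 \<le> a \<longrightarrow> a < b \<longrightarrow> b \<le> n \<longrightarrow> k < n \<longrightarrow> k \<noteq> a - 1 \<longrightarrow> k \<noteq> a \<longrightarrow> k \<noteq> b - 1 \<longrightarrow> k \<noteq> b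
   \<longrightarrow> weq n (cj k (Sw a b)) (Sw a b)"
proof (induction a rule: less_induct)
  case (less a)
  show ?case
  proof (intro allI impI)
    fix k assume h: "1 \<le> a" "a < b" "b \<le> n" "k < n" "k \<noteq> a - 1" "k \<noteq> a" "k \<noteq> b - 1" "k \<noteq> b"
    consider "a = 1" | "a = 2" | m where "a = m + 3"
    proof -
      have "a = 1 \<or> a = 2 \<or> a \<ge> 3" using h(1) by arith
      thus ?thesis using that(1) that(2) that(3)[of "a-3"] by auto
    qed
    thus "weq n (cj k (Sw a b)) (Sw a b)"
    proof cases
      case 1
      have "weq n (cj k (cj 0 (Dw 1 b))) (cj 0 (cj k (Dw 1 b)))"
        using h 1 by (intro cj_comm) (auto simp: adj_def vw_Dw)
      also have "weq n \<dots> (cj 0 (Dw 1 b))"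
        using h 1 by (intro cj_cong D1') auto
      finally show ?thesis using 1 by simp
    next
      case 2
      have S2e: "Sw a b = cj 1 (cj 0 (Dw 1 b))" using 2 by (simp add: numeral_2_eq_2)
      show ?thesis
      proof (cases "k = 0")
        case True
        have n1: "1 < n" using h 2 by simp
        have e0: "weq n (cj 1 (Dw 1 b)) (Dw 2 b)"
          using D4[of 1 b n] h 2 by (simp add: numeral_2_eq_2)
        have e1: "weq n (Dw 1 b) (cj 1 (Dw 2 b))"
          using n1 by (intro cj_eq[OF e0])
        have e2: "weq n (cj 0 (Dw 2 b)) (Dw 2 b)" using h 2 by (intro D1') auto
        have v: "vw n (Dw 2 b)" using h 2 by (intro vw_Dw) auto
        have "weq n (cj 0 (cj 1 (cj 0 (Dw 1 b)))) (cj 0 (cj 1 (cj 0 (cj 1 (Dw 2 b)))))"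
          using e1 n1 by (intro cj_cong) auto
        also have "weq n \<dots> (cj 1 (cj 0 (cj 1 (cj 0 (Dw 2 b)))))"
          using n1 v by (intro cj_c1)
        also have "weq n \<dots> (cj 1 (cj 0 (cj 1 (Dw 2 b))))"
          using e2 n1 by (intro cj_cong) auto
        also have "weq n \<dots> (cj 1 (cj 0 (Dw 1 b)))"
          using weq_sym[OF e1] n1 by (intro cj_cong) auto
        finally show ?thesis using S2e True by simp
      next
        case False
        have "weq n (cj k (cj 1 (Sw 1 b))) (cj 1 (cj k (Sw 1 b)))"
          using h 2 False by (intro cj_comm) (auto simp: adj_def vw_Sw vw_Dw)
        also have "weq n \<dots> (cj 1 (Sw 1 b))"
          using less.IH[rule_format, of 1 k] h 2 False by (intro cj_cong) auto
        finally show ?thesis using 2 by (simp add: numeral_2_eq_2)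
      qed
    next
      case 3
      have Sa: "Sw a b = cj (m+2) (Sw (m+2) b)" using 3 by (simp add: numeral_3_eq_3)
      have Sa1: "Sw (m+2) b = cj (m+1) (Sw (m+1) b)" by simp
      have v: "vw n (Sw (m+1) b)" using h 3 by (intro vw_Sw) auto
      show ?thesis
      proof (cases "k = m + 1")
        case True
        have "weq n (cj k (Sw a b)) (cj (m+2) (cj (m+1) (cj (m+2) (Sw (m+1) b))))"
          unfolding Sa Sa1 True using h 3 v by (intro cj_braid) (auto simp: adj_def)
        also have "weq n \<dots> (cj (m+2) (cj (m+1) (Sw (m+1) b)))"
          using less.IH[rule_format, of "m+1" "m+2"] h 3 by (intro cj_cong) auto
        finally show ?thesis using Sa Sa1 by simp
      next
        case False
        have v2: "vw n (Sw (m+2) b)" using h 3 by (intro vw_Sw) auto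
        have "weq n (cj k (Sw a b)) (cj (m+2) (cj k (Sw (m+2) b)))"
          unfolding Sa using h 3 v2 False by (intro cj_comm) (auto simp: adj_def)
        also have "weq n \<dots> (cj (m+2) (Sw (m+2) b))"
          using less.IH[rule_format, of "m+2" k] h 3 False by (intro cj_cong) auto
        finally show ?thesis using Sa by simp
      qed
    qed
  qed
qed

lemma S1': "1 \<le> a \<Longrightarrow> a < b \<Longrightarrow> b \<le> n \<Longrightarrow> k < n \<Longrightarrow> k \<noteq> a - 1 \<Longrightarrow> k \<noteq> a \<Longrightarrow> k \<noteq> b - 1 \<Longrightarrow> k \<noteq> b
   \<Longrightarrow> weq n (cj k (Sw a b)) (Sw a b)"
  using S1 by blast

lemma S2: "1 \<le> a \<Longrightarrow> a + 1 < n \<or> a + 1 = n \<Longrightarrow> weq n (cj a (Sw a (a+1))) (Sw a (a+1))"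
proof (induction a rule: nat_induct_at_least)
  case base
  have n1: "1 < n" using base by auto
  show ?case using c27_lem[OF n1] by (simp add: numeral_2_eq_2)
next
  case (Suc a)
  define X where "X = Sw a (a+1)"
  have v: "vw n X" unfolding X_def using Suc by (intro vw_Sw) auto
  have e1: "weq n (cj (a+1) X) (Sw a (a+2))" unfolding X_def using S3[of a "a+1" n] Suc by auto
  have "weq n (cj (a+1) (Sw (Suc a) (Suc a + 1))) (cj (a+1) (cj a (cj (a+1) X)))"
    using weq_sym[OF e1] Suc by (simp, intro cj_cong) auto
  also have "weq n \<dots> (cj a (cj (a+1) (cj a X)))"
    using Suc v by (intro cj_braid) (auto simp: adj_def)
  also have "weq n \<dots> (cj a (cj (a+1) X))"
    using Suc X_def by (intro cj_cong) auto
  also have "weq n \<dots> (Sw (Suc a) (Suc a + 1))"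
    using e1 Suc by (simp, intro cj_cong) auto
  finally show ?case by simp
qed



datatype rt = Lg nat | Df nat nat | Sm nat nat

fun rv :: "nat \<Rightarrow> rt \<Rightarrow> bool" where
  "rv n (Lg a) = (1 \<le> a \<and> a \<le> n)"
| "rv n (Df a b) = (1 \<le> a \<and> a < b \<and> b \<le> n)"
| "rv n (Sm a b) = (1 \<le> a \<and> a < b \<and> b \<le> n)"

fun Ew :: "rt \<Rightarrow> gen list" where
  "Ew (Lg a) = Lw a" | "Ew (Df a b) = Dw a b" | "Ew (Sm a b) = Sw a b"

definition sw :: "nat \<Rightarrow> nat \<Rightarrow> nat" where
  "sw k a = (if a = k then k + 1 else if a = k + 1 then k else a)"

fun act :: "nat \<Rightarrow> rt \<Rightarrow> rt" where
  "act k (Lg a) = (if k = 0 then Lg a else Lg (sw k a))"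
| "act k (Df a b) = (if k = 0 then (if a = 1 then Sm 1 b else Df a b)
     else Df (min (sw k a) (sw k b)) (max (sw k a) (sw k b)))"
| "act k (Sm a b) = (if k = 0 then (if a = 1 then Df 1 b else Sm a b)
     else Sm (min (sw k a) (sw k b)) (max (sw k a) (sw k b)))"

lemma A_Lg: "rv n (Lg a) \<Longrightarrow> k < n \<Longrightarrow> weq n (cj k (Ew (Lg a))) (Ew (act k (Lg a))) \<and> rv n (act k (Lg a))"
proof -
  assume h: "rv n (Lg a)" "k < n"
  hence h': "1 \<le> a" "a \<le> n" by auto
  have n0: "0 < n" using h' by auto
  consider "k = 0" | "k \<noteq> 0" "k = a" | "k \<noteq> 0" "k + 1 = a" | "k \<noteq> 0" "k \<noteq> a" "k + 1 \<noteq> a" by auto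
  thus ?thesis
  proof cases
    case 1 thus ?thesis using h h' L1[rule_format, of a n k] by simp
  next
    case 2
    have "Lw (Suc a) = cj a (Lw a)" using h' by (simp add: Lw_step)
    thus ?thesis using 2 h h' n0 by (auto simp: sw_def intro!: weq_refl vw_Lw)
  next
    case 3
    have "Lw a = cj k (Lw k)" using 3 by (simp add: Lw_step[symmetric])
    thus ?thesis using 3 h h' n0 by (auto simp: sw_def intro!: cj_inv vw_Lw)
  next
    case 4
    have "sw k a = a" using 4 by (auto simp: sw_def)
    thus ?thesis using 4 h h' L1[rule_format, of a n k] by simp
  qed
qed

lemma A_Df: "rv n (Df a b) \<Longrightarrow> k < n \<Longrightarrow> weq n (cj k (Ew (Df a b))) (Ew (act k (Df a b))) \<and> rv n (act k (Df a b))"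
proof -
  assume h: "rv n (Df a b)" "k < n"
  hence h': "1 \<le> a" "a < b" "b \<le> n" by auto
  consider "k = 0" "a = 1" | "k \<noteq> 0" "k + 1 = a" | "k = a" "b = a + 1" | "k = a" "b \<noteq> a + 1"
    | "k \<noteq> a" "k + 1 = b" | "k = b" | "k \<noteq> a - 1" "k \<noteq> a" "k \<noteq> b - 1" "k \<noteq> b" by arith
  thus ?thesis
  proof cases
    case 1 thus ?thesis using h h' by (auto intro!: weq_refl vw_Dw)
  next
    case 2
    hence "act k (Df a b) = Df k b" using h' by (auto simp: sw_def)
    thus ?thesis using 2 h h' D5[of a b n] by (auto simp del: act.simps)
  next
    case 3
    hence "act k (Df a b) = Df a b" using h' by (auto simp: sw_def)
    thus ?thesis using 3 h h' cjE_self[of a n] by (auto simp del: act.simps)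
  next
    case 4
    hence "act k (Df a b) = Df (a+1) b" using h' by (auto simp: sw_def)
    thus ?thesis using 4 h h' D4[of a b n] by (auto simp del: act.simps)
  next
    case 5
    hence "act k (Df a b) = Df a k" using h' by (auto simp: sw_def)
    thus ?thesis using 5 h h' D2[of a b n] by (auto simp del: act.simps)
  next
    case 6
    hence "act k (Df a b) = Df a (b+1)" using h' by (auto simp: sw_def)
    thus ?thesis using 6 h h' by (auto intro!: weq_refl vw_Dw)
  next
    case 7
    hence "act k (Df a b) = Df a b" using h' by (auto simp: sw_def)
    thus ?thesis using 7 h h' D1'[of a b n k] by (auto simp del: act.simps)
  qed
qed

lemma A_Sm: "rv n (Sm a b) \<Longrightarrow> k < n \<Longrightarrow> weq n (cj k (Ew (Sm a b))) (Ew (act k (Sm a b))) \<and> rv n (act k (Sm a b))"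
proof -
  assume h: "rv n (Sm a b)" "k < n"
  hence h': "1 \<le> a" "a < b" "b \<le> n" by auto
  consider "k = 0" "a = 1" | "k \<noteq> 0" "k + 1 = a" | "k = a" "b = a + 1" | "k = a" "b \<noteq> a + 1"
    | "k \<noteq> a" "k + 1 = b" | "k = b" | "k \<noteq> a - 1" "k \<noteq> a" "k \<noteq> b - 1" "k \<noteq> b" by arith
  thus ?thesis
  proof cases
    case 1 thus ?thesis using h h' by (auto intro!: cj_inv vw_Dw)
  next
    case 2
    hence "act k (Sm a b) = Sm k b" using h' by (auto simp: sw_def)
    moreover have "Sw a b = cj k (Sw k b)" using 2 by (auto simp: Sw_step[symmetric])
    ultimately show ?thesis using 2 h h' by (auto intro!: cj_inv vw_Sw)
  next
    case 3
    hence "act k (Sm a b) = Sm a b" using h' by (auto simp: sw_def)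
    moreover have "a + 1 < n \<or> a + 1 = n" using 3 h' by arith
    ultimately show ?thesis using 3 h h' S2[of a n] by (auto simp del: act.simps)
  next
    case 4
    hence "act k (Sm a b) = Sm (a+1) b" using h' by (auto simp: sw_def)
    thus ?thesis using 4 h h' by (auto intro!: weq_refl vw_Sw)
  next
    case 5
    hence "act k (Sm a b) = Sm a k" using h' by (auto simp: sw_def)
    thus ?thesis using 5 h h' S4[of a b n] by (auto simp del: act.simps)
  next
    case 6
    hence "act k (Sm a b) = Sm a (b+1)" using h' by (auto simp: sw_def)
    thus ?thesis using 6 h h' S3[of a b n] by (auto simp del: act.simps)
  next
    case 7
    hence "act k (Sm a b) = Sm a b" using h' by (auto simp: sw_def)
    thus ?thesis using 7 h h' S1'[of a b n k] by (auto simp del: act.simps)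
  qed
qed

lemma A: "rv n r \<Longrightarrow> k < n \<Longrightarrow> weq n (cj k (Ew r)) (Ew (act k r)) \<and> rv n (act k r)"
  by (cases r) (simp_all only: A_Lg A_Df A_Sm)



fun vec :: "rt \<Rightarrow> nat \<Rightarrow> real" where
  "vec (Lg a) = (\<lambda>m. if m = a then 2 else 0)"
| "vec (Df a b) = (\<lambda>m. if m = b then 1 else if m = a then -1 else 0)"
| "vec (Sm a b) = (\<lambda>m. if m = a \<or> m = b then 1 else 0)"

lemma refl_pos: "1 \<le> k \<Longrightarrow> k + 1 \<le> n \<Longrightarrow>
  refl_vec n (beta k) x = (\<lambda>m. if m = k then x (k+1) else if m = k + 1 then x k else x m)"
proof -
  assume h: "1 \<le> k" "k + 1 \<le> n"
  have b: "beta k = (\<lambda>m. (if m = k + 1 then 1 else 0) - (if m = k then 1 else 0))"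
    using h by (auto simp: beta_def fun_eq_iff)
  have i1: "inner_n n x (beta k) = x (k+1) - x k"
    unfolding inner_n_def b using h
    by (simp add: right_diff_distrib sum_subtractf if_distrib[of "\<lambda>t. x _ * t"] sum.delta cong: if_cong)
  have bb: "\<And>m. beta k m * beta k m = (if m = k + 1 then 1 else 0) + (if m = k then 1 else 0)"
    using h by (auto simp: beta_def)
  have i2: "inner_n n (beta k) (beta k) = 2"
    unfolding inner_n_def using h by (simp add: bb sum.distrib)
  show ?thesis unfolding refl_vec_def i1 i2 using h by (auto simp: fun_eq_iff b field_simps)
qed

lemma refl_zero: "1 \<le> n \<Longrightarrow> refl_vec n (beta 0) x = (\<lambda>m. if m = 1 then - x 1 else x m)"
proof -
  assume h: "1 \<le> n"
  have b: "beta 0 = (\<lambda>m. 2 * (if m = 1 then 1 else 0))"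
    by (auto simp: beta_def fun_eq_iff)
  have i1: "inner_n n x (beta 0) = 2 * x 1"
    unfolding inner_n_def b using h
    by (simp add: if_distrib[of "\<lambda>t. x _ * (2 * t)"] sum.delta cong: if_cong)
  have i2: "inner_n n (beta 0) (beta 0) = 4"
    unfolding inner_n_def b using h
    by (simp add: if_distrib sum.delta cong: if_cong)
  show ?thesis unfolding refl_vec_def i1 i2 using h by (auto simp: fun_eq_iff b field_simps)
qed


fun sg :: "nat \<Rightarrow> rt \<Rightarrow> real" where
  "sg k (Lg a) = (if k = 0 \<and> a = 1 then -1 else 1)"
| "sg k (Df a b) = (if k \<noteq> 0 \<and> sw k b < sw k a then -1 else 1)"
| "sg k (Sm a b) = 1"

lemma B_pos: "rv n r \<Longrightarrow> 1 \<le> k \<Longrightarrow> k < n \<Longrightarrow>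
  refl_vec n (beta k) (\<lambda>m. s * vec r m) = (\<lambda>m. (s * sg k r) * vec (act k r) m)"
  by (cases r) (auto simp: refl_pos fun_eq_iff sw_def min_def max_def)

lemma B_zero: "rv n r \<Longrightarrow> 0 < n \<Longrightarrow>
  refl_vec n (beta 0) (\<lambda>m. s * vec r m) = (\<lambda>m. (s * sg 0 r) * vec (act 0 r) m)"
  by (cases r) (auto simp: refl_zero fun_eq_iff)

lemma sg_pm: "sg k r = 1 \<or> sg k r = -1" by (cases r) auto


lemma word_act_Cons: "word_act n (a # ws) x = refl_vec n (beta a) (word_act n ws x)"
  by (simp add: word_act_def)

lemma M: "2 \<le> n \<Longrightarrow> i < n \<Longrightarrow> set ws \<subseteq> {..<n} \<Longrightarrow>
  \<exists>r s. rv n r \<and> (s = 1 \<or> s = -1) \<and> word_act n ws (beta i) = (\<lambda>m. s * vec r m)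
     \<and> weq n (map R ws @ [E i] @ map R (rev ws)) (Ew r)"
proof (induction ws)
  case Nil
  define r where "r = (if i = 0 then Lg 1 else Df i (i+1))"
  have "rv n r" using Nil by (auto simp: r_def)
  moreover have "word_act n [] (beta i) = (\<lambda>m. 1 * vec r m)"
    by (auto simp: word_act_def r_def beta_def fun_eq_iff)
  moreover have "weq n (map R [] @ [E i] @ map R (rev [])) (Ew r)"
    using Nil by (auto simp: r_def valid_gen_def intro!: weq_refl)
  ultimately show ?case by blast
next
  case (Cons a ws)
  then obtain r s where h: "rv n r" "s = 1 \<or> s = -1" "word_act n ws (beta i) = (\<lambda>m. s * vec r m)"
     "weq n (map R ws @ [E i] @ map R (rev ws)) (Ew r)" by auto
  have a: "a < n" using Cons by auto
  have v: "word_act n (a # ws) (beta i) = (\<lambda>m. (s * sg a r) * vec (act a r) m)"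
  proof (cases "a = 0")
    case True thus ?thesis using h a B_zero[of n r s] by (simp add: word_act_Cons)
  next
    case False thus ?thesis using h a B_pos[of n r a s] by (simp add: word_act_Cons)
  qed
  have "map R (a # ws) @ [E i] @ map R (rev (a # ws)) = cj a (map R ws @ [E i] @ map R (rev ws))"
    by (simp add: cj_def)
  hence "weq n (map R (a # ws) @ [E i] @ map R (rev (a # ws))) (cj a (Ew r))"
    using cj_cong[OF h(4) a] by simp
  also have "weq n \<dots> (Ew (act a r))" using A[OF h(1) a] by simp
  finally have w: "weq n (map R (a # ws) @ [E i] @ map R (rev (a # ws))) (Ew (act a r))" .
  have "s * sg a r = 1 \<or> s * sg a r = -1" using h(2) sg_pm[of a r] by auto
  thus ?case using v w A[OF h(1) a] by blast
qed

lemma C: "rv n r \<Longrightarrow> (s = 1 \<or> s = -1) \<Longrightarrow> beta j = (\<lambda>m. s * vec r m) \<Longrightarrow> Ew r = [E j]"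
proof -
  assume h: "rv n r" "s = 1 \<or> s = -1" "beta j = (\<lambda>m. s * vec r m)"
  have p: "\<And>m. beta j m = s * vec r m" using h(3) by metis
  show ?thesis
  proof (cases r)
    case (Lg a)
    have "beta j a = s * 2" "beta j 1 = s * vec r 1" using p[of a] p[of 1] Lg by auto
    thus ?thesis using h(1,2) Lg by (auto simp: beta_def split: if_splits)
  next
    case (Df a b)
    have "beta j a = - s" "beta j b = s" using p[of a] p[of b] Df h by auto
    thus ?thesis using h(1,2) Df by (auto simp: beta_def split: if_splits)
  next
    case (Sm a b)
    have "beta j a = s" "beta j b = s" using p[of a] p[of b] Sm h by auto
    thus ?thesis using h(1,2) Sm by (auto simp: beta_def split: if_splits)
  qed
qed

theorem mainTheorem10:
  fixes n i j :: nat and ws :: "nat list"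
  assumes "2 \<le> n" and "i < n" and "j < n"
    and "set ws \<subseteq> {..<n}"
    and "word_act n ws (beta i) = beta j"
  shows "br_eq n (mono 0 (map R ws @ [E i] @ map R (rev ws))) (mono 0 [E j])"
proof -
  obtain r s where h: "rv n r" "s = 1 \<or> s = -1" "word_act n ws (beta i) = (\<lambda>m. s * vec r m)"
     "weq n (map R ws @ [E i] @ map R (rev ws)) (Ew r)" using M[OF assms(1,2,4)] by blast
  have "Ew r = [E j]" using C[OF h(1,2)] h(3) assms(5) by simp
  thus ?thesis using h(4) unfolding weq_def by simp
qed


end
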